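(* Let $\Delta$ be the hereditary class property "bounded maximum degree" and $\Lambda$ the hereditary class property "bounded connected components". Then $\Delta$ is the decomposition horizon of $\Lambda$. Moreover, $\Lambda^\ast=\Lambda^+=\Delta$.
   Context: Graphs are finite and simple. A hereditary class is a class of graphs closed under isomorphism and induced subgraphs. A hereditary class property is a set $\Pi$ of hereditary classes such that $\mathscr C\in\Pi$, $\mathscr D$ hereditary, $\mathscr D\subseteq\mathscr C$ imply $\mathscr D\in\Pi$. $\Delta$ is the set of hereditary classes $\mathscr C$ for which there is $d$ with every graph in $\mathscr C$ having maximum degree at most $d$; $\Lambda$ is the set of hereditary classes $\mathscr C$ for which there is $c$ with every connected component of every graph in $\mathscr C$ having at most $c$ vertices. For non-decreasing $f:\mathbb N\to\mathbb N$ and positive integer $p$, $\mathscr C$ has an $f$-bounded $\Pi$-decomposition with parameter $p$ if there is $\mathscr D_p\in\Pi$ such that every $G\in\mathscr C$ has a partition $V_1,\dots,V_N$ of $V(G)$ with $N\le f(|G|)$ and $G[V_{i_1}\cup\dots\cup V_{i_p}]\in\mathscr D_p$ for all $i_1,\dots,i_p\in[N]$. $\Pi^+$ (resp. $\Pi^\ast$) is the set of hereditary classes that, for every positive integer $p$, have an $f$-bounded $\Pi$-decomposition with parameter $p$ for some constant function $f$ (resp. some non-decreasing $f$ with $f(n)=n^{o(1)}$). $\Pi$ is a decomposition horizon if $\Pi^\ast=\Pi$; the decomposition horizon of $\Lambda$ is the smallest (under inclusion) decomposition horizon containing $\Lambda$. *)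

theory Defs
  imports Complex_Main
begin

text \<open>Finite simple graphs with vertices drawn from nat (every finite graph is
isomorphic to one of these). A graph is a pair (V, E) with V finite and E a set
of 2-element subsets of V.\<close>

type_synonym ngraph = "nat set \<times> nat set set"

definition verts :: "ngraph \<Rightarrow> nat set" where "verts G = fst G"
definition edges :: "ngraph \<Rightarrow> nat set set" where "edges G = snd G"

definition is_graph :: "ngraph \<Rightarrow> bool" where
  "is_graph G \<longleftrightarrow> finite (verts G) \<and>
     (\<forall>e\<in>edges G. \<exists>x y. x \<noteq> y \<and> x \<in> verts G \<and> y \<in> verts G \<and> e = {x, y})"

definition adj :: "ngraph \<Rightarrow> nat \<Rightarrow> nat \<Rightarrow> bool" where
  "adj G x y \<longleftrightarrow> {x, y} \<in> edges G"

definition induced :: "ngraph \<Rightarrow> nat set \<Rightarrow> ngraph" where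
  "induced G S = (S \<inter> verts G, {e \<in> edges G. e \<subseteq> S})"

definition graph_iso :: "ngraph \<Rightarrow> ngraph \<Rightarrow> bool" where
  "graph_iso G H \<longleftrightarrow> (\<exists>f. bij_betw f (verts G) (verts H) \<and>
     (\<forall>x\<in>verts G. \<forall>y\<in>verts G. adj G x y \<longleftrightarrow> adj H (f x) (f y)))"

definition hereditary :: "ngraph set \<Rightarrow> bool" where
  "hereditary C \<longleftrightarrow> (\<forall>G\<in>C. is_graph G) \<and>
     (\<forall>G\<in>C. \<forall>H. is_graph H \<and> graph_iso G H \<longrightarrow> H \<in> C) \<and>
     (\<forall>G\<in>C. \<forall>S. S \<subseteq> verts G \<longrightarrow> induced G S \<in> C)"

definition hered_property :: "ngraph set set \<Rightarrow> bool" where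
  "hered_property \<Pi> \<longleftrightarrow> (\<forall>C\<in>\<Pi>. hereditary C) \<and>
     (\<forall>C\<in>\<Pi>. \<forall>D. hereditary D \<and> D \<subseteq> C \<longrightarrow> D \<in> \<Pi>)"

definition degree :: "ngraph \<Rightarrow> nat \<Rightarrow> nat" where
  "degree G v = card {u \<in> verts G. adj G u v}"

definition component :: "ngraph \<Rightarrow> nat \<Rightarrow> nat set" where
  "component G v = {u. (adj G)\<^sup>*\<^sup>* v u}"

definition Delta :: "ngraph set set" where
  "Delta = {C. hereditary C \<and> (\<exists>d. \<forall>G\<in>C. \<forall>v\<in>verts G. degree G v \<le> d)}"

definition Lambda :: "ngraph set set" where
  "Lambda = {C. hereditary C \<and> (\<exists>c. \<forall>G\<in>C. \<forall>v\<in>verts G. card (component G v) \<le> c)}"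

text \<open>C has an f-bounded Pi-decomposition with parameter p. The partition is
given as parts P 0, ..., P (N-1) (pairwise disjoint, covering V(G)).\<close>
definition has_decomp :: "ngraph set set \<Rightarrow> ngraph set \<Rightarrow> (nat \<Rightarrow> nat) \<Rightarrow> nat \<Rightarrow> bool" where
  "has_decomp \<Pi> C f p \<longleftrightarrow> (\<exists>D\<in>\<Pi>. \<forall>G\<in>C. \<exists>N P.
      N \<le> f (card (verts G)) \<and>
      (\<Union>i<N. P i) = verts G \<and>
      (\<forall>i<N. \<forall>j<N. i \<noteq> j \<longrightarrow> P i \<inter> P j = {}) \<and>
      (\<forall>idx :: nat \<Rightarrow> nat. (\<forall>k<p. idx k < N) \<longrightarrow>
          induced G (\<Union>k<p. P (idx k)) \<in> D))"

definition plus_closure :: "ngraph set set \<Rightarrow> ngraph set set" where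
  "plus_closure \<Pi> = {C. hereditary C \<and>
     (\<forall>p>0. \<exists>c::nat. has_decomp \<Pi> C (\<lambda>_. c) p)}"

text \<open>f(n) = n^{o(1)}: for every eps > 0, eventually f(n) <= n powr eps.\<close>
definition subpoly :: "(nat \<Rightarrow> nat) \<Rightarrow> bool" where
  "subpoly f \<longleftrightarrow> (\<forall>\<epsilon>::real>0. eventually (\<lambda>n. real (f n) \<le> real n powr \<epsilon>) at_top)"

definition star_closure :: "ngraph set set \<Rightarrow> ngraph set set" where
  "star_closure \<Pi> = {C. hereditary C \<and>
     (\<forall>p>0. \<exists>f. mono f \<and> subpoly f \<and> has_decomp \<Pi> C f p)}"

definition decomposition_horizon :: "ngraph set set \<Rightarrow> bool" where
  "decomposition_horizon \<Pi> \<longleftrightarrow> hered_property \<Pi> \<and> star_closure \<Pi> = \<Pi>"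

definition is_decomposition_horizon_of :: "ngraph set set \<Rightarrow> ngraph set set \<Rightarrow> bool" where
  "is_decomposition_horizon_of \<Pi> L \<longleftrightarrow> decomposition_horizon \<Pi> \<and> L \<subseteq> \<Pi> \<and>
     (\<forall>\<Pi>'. decomposition_horizon \<Pi>' \<and> L \<subseteq> \<Pi>' \<longrightarrow> \<Pi> \<subseteq> \<Pi>')"

end

theory Submission
  imports Defs
begin

lemma adj_sym: "adj G x y = adj G y x"
  by (simp add: adj_def insert_commute)

lemma adj_verts: "is_graph G \<Longrightarrow> adj G x y \<Longrightarrow> x \<in> verts G \<and> y \<in> verts G \<and> x \<noteq> y"
  unfolding is_graph_def adj_def by (auto simp: doubleton_eq_iff)

lemma verts_induced[simp]: "verts (induced G S) = S \<inter> verts G"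
  by (simp add: induced_def verts_def)

lemma edges_induced[simp]: "edges (induced G S) = {e \<in> edges G. e \<subseteq> S}"
  by (simp add: induced_def edges_def)

lemma adj_induced: "adj (induced G S) x y \<longleftrightarrow> adj G x y \<and> x \<in> S \<and> y \<in> S"
  by (auto simp: adj_def)

lemma is_graph_induced: "is_graph G \<Longrightarrow> is_graph (induced G S)"
  unfolding is_graph_def by fastforce

lemma comp_subset: "is_graph G \<Longrightarrow> component G v \<subseteq> insert v (verts G)"
proof
  fix u assume g: "is_graph G" and "u \<in> component G v"
  hence "(adj G)\<^sup>*\<^sup>* v u" by (simp add: component_def)
  thus "u \<in> insert v (verts G)"
    by (induction rule: rtranclp_induct) (auto dest: adj_verts[OF g])
qed

lemma finite_verts: "is_graph G \<Longrightarrow> finite (verts G)"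
  by (simp add: is_graph_def)

lemma finite_comp: "is_graph G \<Longrightarrow> finite (component G v)"
  using comp_subset finite_verts finite_subset by (metis finite_insert)

lemma comp_induced_le:
  assumes "is_graph G" shows "card (component (induced G S) v) \<le> card (component G v)"
proof (rule card_mono[OF finite_comp[OF assms]])
  show "component (induced G S) v \<subseteq> component G v"
  proof
    fix u assume "u \<in> component (induced G S) v"
    hence "(adj (induced G S))\<^sup>*\<^sup>* v u" by (simp add: component_def)
    hence "(adj G)\<^sup>*\<^sup>* v u"
      by (induction rule: rtranclp_induct) (auto simp: adj_induced intro: rtranclp.rtrancl_into_rtrancl)
    thus "u \<in> component G v" by (simp add: component_def)
  qed
qed

lemma comp_iso:
  assumes "is_graph G" "is_graph H" "graph_iso G H" "w \<in> verts H"
  shows "\<exists>v\<in>verts G. card (component H w) \<le> card (component G v)"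
proof -
  obtain f where bij: "bij_betw f (verts G) (verts H)" and fa: "\<forall>x\<in>verts G. \<forall>y\<in>verts G. adj G x y \<longleftrightarrow> adj H (f x) (f y)"
    using assms(3) unfolding graph_iso_def by blast
  obtain v where v: "v \<in> verts G" "w = f v" using bij assms(4) by (auto simp: bij_betw_def)
  have "component H w \<subseteq> f ` (component G v \<inter> verts G)"
  proof
    fix u assume "u \<in> component H w"
    hence "(adj H)\<^sup>*\<^sup>* w u" by (simp add: component_def)
    thus "u \<in> f ` (component G v \<inter> verts G)"
    proof (induction rule: rtranclp_induct)
      case base thus ?case using v by (auto simp: component_def)
    next
      case (step y z)
      then obtain x where x: "x \<in> component G v" "x \<in> verts G" "y = f x" by auto
      have "z \<in> verts H" using adj_verts[OF assms(2) step(2)] by blast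
      then obtain x' where x': "x' \<in> verts G" "z = f x'" using bij by (auto simp: bij_betw_def)
      have "adj G x x'" using fa x x' step(2) by blast
      hence "x' \<in> component G v" using x(1) by (auto simp: component_def intro: rtranclp.rtrancl_into_rtrancl)
      thus ?case using x' by blast
    qed
  qed
  hence "card (component H w) \<le> card (f ` (component G v \<inter> verts G))"
    by (rule card_mono[rotated]) (use assms(1) in \<open>auto simp: is_graph_def\<close>)
  also have "\<dots> \<le> card (component G v \<inter> verts G)" by (rule card_image_le) (use assms(1) in \<open>auto simp: is_graph_def\<close>)
  also have "\<dots> \<le> card (component G v)" by (rule card_mono) (auto simp: finite_comp assms(1))
  finally show ?thesis using v by blast
qed

definition compcls :: "nat \<Rightarrow> ngraph set" where
  "compcls p = {H. is_graph H \<and> (\<forall>v\<in>verts H. card (component H v) \<le> p)}"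

lemma compcls_Lambda: "compcls p \<in> Lambda"
proof -
  have "hereditary (compcls p)"
    unfolding hereditary_def
  proof (intro conjI ballI allI impI)
    fix G assume "G \<in> compcls p" thus "is_graph G" by (simp add: compcls_def)
  next
    fix G H assume G: "G \<in> compcls p" and H: "is_graph H \<and> graph_iso G H"
    show "H \<in> compcls p" unfolding compcls_def
    proof (intro CollectI conjI ballI)
      show "is_graph H" using H by simp
      fix w assume "w \<in> verts H"
      then obtain v where "v \<in> verts G" "card (component H w) \<le> card (component G v)"
        using comp_iso[of G H w] G H by (auto simp: compcls_def)
      thus "card (component H w) \<le> p" using G by (force simp: compcls_def)
    qed
  next
    fix G S assume G: "G \<in> compcls p" and "S \<subseteq> verts G"
    show "induced G S \<in> compcls p" unfolding compcls_def
    proof (intro CollectI conjI ballI)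
      show "is_graph (induced G S)" using G is_graph_induced by (simp add: compcls_def)
      fix v assume "v \<in> verts (induced G S)"
      thus "card (component (induced G S) v) \<le> p"
        using comp_induced_le[of G S v] G by (force simp: compcls_def)
    qed
  qed
  thus ?thesis unfolding Lambda_def compcls_def by auto
qed

definition near :: "ngraph \<Rightarrow> nat \<Rightarrow> nat \<Rightarrow> nat \<Rightarrow> bool" where
  "near G r u w \<longleftrightarrow> (\<exists>j\<le>r. (adj G ^^ j) u w)"

lemma relpow_adj_sym: "(adj G ^^ j) u w \<Longrightarrow> (adj G ^^ j) w u"
proof (induction j arbitrary: w)
  case 0 thus ?case by simp
next
  case (Suc j)
  then obtain y where "(adj G ^^ j) u y" "adj G y w" by (auto elim: relpowp_Suc_E)
  hence "(adj G ^^ j) y u" "adj G w y" using Suc.IH adj_sym by metis+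
  thus ?case by (rule relpowp_Suc_I2[rotated])
qed

lemma near_sym: "near G r u w \<Longrightarrow> near G r w u"
  unfolding near_def using relpow_adj_sym by blast

lemma near_Suc: "{w. near G (Suc r) u w} = {w. near G r u w} \<union> (\<Union>z\<in>{w. near G r u w}. {w. adj G z w})"
proof (intro set_eqI iffI)
  fix w assume "w \<in> {w. near G (Suc r) u w}"
  then obtain j where j: "j \<le> Suc r" "(adj G ^^ j) u w" by (auto simp: near_def)
  show "w \<in> {w. near G r u w} \<union> (\<Union>z\<in>{w. near G r u w}. {w. adj G z w})"
  proof (cases j)
    case 0 thus ?thesis using j by (auto simp: near_def)
  next
    case (Suc i)
    then obtain y where "(adj G ^^ i) u y" "adj G y w" using j by (auto elim: relpowp_Suc_E)
    thus ?thesis using j Suc by (auto simp: near_def)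
  qed
next
  fix w assume "w \<in> {w. near G r u w} \<union> (\<Union>z\<in>{w. near G r u w}. {w. adj G z w})"
  thus "w \<in> {w. near G (Suc r) u w}"
  proof
    assume "w \<in> {w. near G r u w}"
    then obtain j where "j \<le> r" "(adj G ^^ j) u w" by (auto simp: near_def)
    thus ?thesis unfolding near_def by (intro CollectI exI[of _ j]) auto
  next
    assume "w \<in> (\<Union>z\<in>{w. near G r u w}. {w. adj G z w})"
    then obtain z j where "j \<le> r" "(adj G ^^ j) u z" "adj G z w" by (auto simp: near_def)
    thus ?thesis unfolding near_def by (intro CollectI exI[of _ "Suc j"]) (auto intro: relpowp_Suc_I)
  qed
qed

lemma nbr_card:
  assumes "is_graph G" "\<forall>v\<in>verts G. degree G v \<le> d"
  shows "finite {w. adj G z w} \<and> card {w. adj G z w} \<le> d"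
proof (cases "z \<in> verts G")
  case True
  have "{w. adj G z w} = {u \<in> verts G. adj G u z}" using adj_verts[OF assms(1)] adj_sym by blast
  thus ?thesis using assms True finite_verts by (auto simp: degree_def)
next
  case False
  hence "{w. adj G z w} = {}" using adj_verts[OF assms(1)] by blast
  thus ?thesis by simp
qed

lemma near_card:
  assumes "is_graph G" "\<forall>v\<in>verts G. degree G v \<le> d"
  shows "finite {w. near G r u w} \<and> card {w. near G r u w} \<le> (d+1)^r"
proof (induction r)
  case 0
  have "{w. near G 0 u w} = {u}" by (auto simp: near_def)
  thus ?case by simp
next
  case (Suc r)
  let ?A = "{w. near G r u w}"
  have fin: "finite (\<Union>z\<in>?A. {w. adj G z w})" using Suc nbr_card[OF assms] by blast
  have "card (\<Union>z\<in>?A. {w. adj G z w}) \<le> (\<Sum>z\<in>?A. card {w. adj G z w})"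
    using Suc by (intro card_UN_le) blast
  also have "\<dots> \<le> card ?A * d" using nbr_card[OF assms] sum_bounded_above[of ?A "\<lambda>z. card {w. adj G z w}" d]
    by simp
  finally have "card (?A \<union> (\<Union>z\<in>?A. {w. adj G z w})) \<le> card ?A + card ?A * d"
    by (meson add_le_mono card_Un_le le_refl order_trans)
  also have "\<dots> = card ?A * (d+1)" by simp
  also have "\<dots> \<le> (d+1)^r * (d+1)" using Suc by (intro mult_le_mono1) blast
  finally show ?case unfolding near_Suc using Suc fin by (simp add: mult.commute)
qed

lemma coloring_aux:
  assumes "is_graph G" "\<forall>v\<in>verts G. degree G v \<le> d"
  shows "finite S \<Longrightarrow> \<exists>col. (\<forall>v\<in>S. col v < (d+1)^r) \<and>
           (\<forall>u\<in>S. \<forall>w\<in>S. u \<noteq> w \<and> near G r u w \<longrightarrow> col u \<noteq> col w)"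
proof (induction S rule: finite_induct)
  case empty thus ?case by auto
next
  case (insert x S)
  then obtain col where c1: "\<forall>v\<in>S. col v < (d+1)^r"
    and c2: "\<forall>u\<in>S. \<forall>w\<in>S. u \<noteq> w \<and> near G r u w \<longrightarrow> col u \<noteq> col w" by blast
  let ?B = "{w. near G r x w}"
  have fB: "finite ?B" and cB: "card ?B \<le> (d+1)^r" using near_card[OF assms] by auto
  have xB: "x \<in> ?B" by (auto simp: near_def)
  have "card (col ` (?B - {x})) \<le> card (?B - {x})" by (rule card_image_le) (use fB in auto)
  also have "\<dots> < (d+1)^r"
  proof -
    have "card ?B > 0" using fB xB card_gt_0_iff by blast
    thus ?thesis using fB cB xB by (simp add: card_Diff_singleton)
  qed
  finally have "\<not> {..<(d+1)^r} \<subseteq> col ` (?B - {x})"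
    by (metis card_lessThan card_mono finite_Diff fB finite_imageI not_le)
  then obtain k where k: "k < (d+1)^r" "k \<notin> col ` (?B - {x})" by auto
  show ?case
  proof (intro exI[of _ "col(x := k)"] conjI ballI impI)
    fix v assume "v \<in> insert x S" thus "(col(x := k)) v < (d+1)^r" using c1 k by auto
  next
    fix u w assume u: "u \<in> insert x S" and w: "w \<in> insert x S" and uw: "u \<noteq> w \<and> near G r u w"
    show "(col(x := k)) u \<noteq> (col(x := k)) w"
    proof (cases "u = x")
      case True thus ?thesis using uw w k by auto
    next
      case False
      note F = False
      show ?thesis
      proof (cases "w = x")
        case True thus ?thesis using uw u k F near_sym by fastforce
      next
        case False thus ?thesis using F u w uw c2 by auto
      qed
    qed
  qed
qed

lemma near_mono_rel:
  assumes "\<And>x y. adj H x y \<Longrightarrow> adj G x y" "near H r u w" shows "near G r u w"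
  using assms relpowp_mono unfolding near_def by metis

lemma near_trans: "near G a u v \<Longrightarrow> near G b v w \<Longrightarrow> near G (a+b) u w"
  unfolding near_def by (meson add_le_mono relpowp_trans)

lemma near_verts: "is_graph G \<Longrightarrow> near G r v u \<Longrightarrow> v \<in> verts G \<Longrightarrow> u \<in> verts G"
  unfolding near_def
proof (elim exE conjE)
  fix j assume g: "is_graph G" and "(adj G ^^ j) v u" "v \<in> verts G"
  thus "u \<in> verts G"
    by (induction j arbitrary: u) (auto elim: relpowp_Suc_E dest: adj_verts[OF g])
qed

lemma near_le: "near G k v u \<Longrightarrow> k \<le> m \<Longrightarrow> near G m v u"
  unfolding near_def using order_trans by blast

lemma comp_bound:
  assumes G: "is_graph G" and col: "\<forall>u\<in>verts G. \<forall>w\<in>verts G. u \<noteq> w \<and> near G (2*p) u w \<longrightarrow> col u \<noteq> col w"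
  and T: "\<forall>v\<in>T. col v \<in> I" and cardI: "card I \<le> p" and fI: "finite I" and v: "v \<in> verts (induced G T)"
  shows "card (component (induced G T) v) \<le> p"
proof -
  define H where "H = induced G T"
  have gH: "is_graph H" using G is_graph_induced H_def by blast
  define b where "b k = {u. near H k v u}" for k
  have bH: "b k \<subseteq> verts H" for k using near_verts[OF gH] v H_def b_def by auto
  have fb: "finite (b k)" for k using bH finite_verts[OF gH] finite_subset by blast
  have bp: "card (b p) \<le> p"
  proof -
    have "inj_on col (b p)"
    proof (rule inj_onI, rule ccontr)
      fix x y assume x: "x \<in> b p" and y: "y \<in> b p" and cxy: "col x = col y" and ne: "x \<noteq> y"
      have "near H p x v" using x near_sym b_def by fastforce
      hence "near H (p + p) x y" using y near_trans b_def by fastforce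
      hence "near G (2*p) x y" using near_mono_rel[of H G] H_def adj_induced by (simp add: mult_2)
      moreover have "x \<in> verts G" "y \<in> verts G" using x y bH H_def by auto
      ultimately show False using col ne cxy by blast
    qed
    hence "card (b p) = card (col ` b p)" by (simp add: card_image)
    also have "\<dots> \<le> card I" using bH T H_def by (intro card_mono[OF fI]) auto
    finally show ?thesis using cardI by simp
  qed
  have step: "b (Suc k) = b k \<union> (\<Union>z\<in>b k. {w. adj H z w})" for k
    unfolding b_def by (rule near_Suc)
  have mono_b: "k \<le> m \<Longrightarrow> b k \<subseteq> b m" for k m unfolding b_def using near_le by blast
  have "\<exists>k<p. b (Suc k) = b k"
  proof (rule ccontr)
    assume "\<not> ?thesis"
    hence ne: "\<forall>k<p. b (Suc k) \<noteq> b k" by blast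
    have "k \<le> p \<Longrightarrow> card (b k) \<ge> k + 1" for k
    proof (induction k)
      case 0
      have "v \<in> b 0" by (simp add: b_def near_def)
      thus ?case using fb card_gt_0_iff by (metis One_nat_def Suc_leI add_0 empty_iff)
    next
      case (Suc k)
      have "b (Suc k) \<noteq> b k" using ne Suc.prems by simp
      hence "b k \<subset> b (Suc k)" using mono_b[of k "Suc k"] by auto
      hence "card (b k) < card (b (Suc k))" using fb psubset_card_mono by blast
      thus ?case using Suc by simp
    qed
    from this[of p] bp show False by simp
  qed
  then obtain k where k: "k < p" "b (Suc k) = b k" by blast
  have stab: "b (k + m) = b k" for m
  proof (induction m)
    case 0 thus ?case by simp
  next
    case (Suc m)
    have "b (k + Suc m) = b (Suc (k + m))" by simp
    also have "\<dots> = b k \<union> (\<Union>z\<in>b k. {w. adj H z w})" using step[of "k+m"] Suc by simp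
    also have "\<dots> = b k" using step[of k] k by simp
    finally show ?case .
  qed
  have "component H v \<subseteq> b p"
  proof
    fix u assume "u \<in> component H v"
    then obtain n where "(adj H ^^ n) v u" by (auto simp: component_def rtranclp_power)
    hence "u \<in> b (k + n)" unfolding b_def near_def by (intro CollectI exI[of _ n]) simp
    hence "u \<in> b k" using stab by simp
    thus "u \<in> b p" using mono_b[of k p] k by auto
  qed
  hence "card (component H v) \<le> card (b p)" using fb card_mono by blast
  thus ?thesis using bp H_def by simp
qed

lemma Delta_plus:
  assumes C: "C \<in> Delta" shows "C \<in> plus_closure Lambda"
proof -
  from C obtain d where hC: "hereditary C" and dC: "\<forall>G\<in>C. \<forall>v\<in>verts G. degree G v \<le> d"
    unfolding Delta_def by blast
  have "has_decomp Lambda C (\<lambda>_. (d+1)^(2*p)) p" for p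
    unfolding has_decomp_def
  proof (intro bexI[OF _ compcls_Lambda[of p]] ballI)
    fix G assume GC: "G \<in> C"
    have gG: "is_graph G" using hC GC by (simp add: hereditary_def)
    obtain col where c1: "\<forall>v\<in>verts G. col v < (d+1)^(2*p)"
      and c2: "\<forall>u\<in>verts G. \<forall>w\<in>verts G. u \<noteq> w \<and> near G (2*p) u w \<longrightarrow> col u \<noteq> col w"
      using coloring_aux[OF gG, of d "verts G" "2*p"] dC GC finite_verts[OF gG] by blast
    define P where "P i = {v \<in> verts G. col v = i}" for i
    show "\<exists>N P. N \<le> (d+1)^(2*p) \<and> (\<Union>i<N. P i) = verts G \<and>
        (\<forall>i<N. \<forall>j<N. i \<noteq> j \<longrightarrow> P i \<inter> P j = {}) \<and>
        (\<forall>idx :: nat \<Rightarrow> nat. (\<forall>k<p. idx k < N) \<longrightarrow> induced G (\<Union>k<p. P (idx k)) \<in> compcls p)"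
    proof (intro exI[of _ "(d+1)^(2*p)"] exI[of _ P] conjI allI impI)
      show "(\<Union>i<(d+1)^(2*p). P i) = verts G" using c1 by (auto simp: P_def)
    next
      fix i j :: nat assume "i \<noteq> j" thus "P i \<inter> P j = {}" by (auto simp: P_def)
    next
      fix idx :: "nat \<Rightarrow> nat"
      let ?T = "\<Union>k<p. P (idx k)"
      show "induced G ?T \<in> compcls p" unfolding compcls_def
      proof (intro CollectI conjI ballI)
        show "is_graph (induced G ?T)" using gG is_graph_induced by blast
        fix v assume "v \<in> verts (induced G ?T)"
        thus "card (component (induced G ?T) v) \<le> p"
          by (intro comp_bound[OF gG c2, of _ "idx ` {..<p}"])
             (auto simp: P_def intro: order_trans[OF card_image_le])
      qed
    qed simp
  qed
  thus ?thesis using hC unfolding plus_closure_def by blast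
qed

lemma subpoly_const: "subpoly (\<lambda>_. c)"
  unfolding subpoly_def
proof (intro allI impI)
  fix \<epsilon> :: real assume e: "\<epsilon> > 0"
  define M where "M = (real c + 1) powr (1/\<epsilon>)"
  have "eventually (\<lambda>n. n \<ge> nat \<lceil>M\<rceil>) at_top" by (rule eventually_ge_at_top)
  thus "eventually (\<lambda>n. real c \<le> real n powr \<epsilon>) at_top"
  proof eventually_elim
    case (elim n)
    have M0: "M \<ge> 0" by (simp add: M_def)
    have "M \<le> real n" using elim by linarith
    hence "M powr \<epsilon> \<le> real n powr \<epsilon>" using M0 e by (intro powr_mono2) auto
    moreover have "M powr \<epsilon> = real c + 1" using e by (simp add: M_def powr_powr)
    ultimately show ?case by simp
  qed
qed

lemma sq_bound:
  assumes "real m \<le> real d * sqrt (real m + 1)" shows "m \<le> d*d"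
proof (rule ccontr)
  assume "\<not> m \<le> d*d"
  hence "d * d + 1 \<le> m" by simp
  hence "real (d * d + 1) \<le> real m" by (simp only: of_nat_le_iff)
  hence m: "real m \<ge> real d * real d + 1" by simp
  have "real m ^ 2 \<le> (real d * sqrt (real m + 1)) ^ 2" using assms by (intro power_mono) auto
  also have "\<dots> = real d * real d * (real m + 1)" by (simp add: power_mult_distrib power2_eq_square)
  finally have a: "real m * real m \<le> real d * real d * real m + real d * real d" by (simp add: power2_eq_square algebra_simps)
  have "(real d * real d + 1) * real m \<le> real m * real m" using m by (intro mult_right_mono) auto
  thus False using a m by (simp add: algebra_simps)
qed

lemma star_Delta:
  assumes C: "C \<in> star_closure Delta" shows "C \<in> Delta"
proof -
  have hC: "hereditary C" using C unfolding star_closure_def by blast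
  have "\<exists>f. mono f \<and> subpoly f \<and> has_decomp Delta C f 2" using C unfolding star_closure_def by simp
  then obtain f where sf: "subpoly f" and hd: "has_decomp Delta C f 2" by blast
  from hd obtain D where DD: "D \<in> Delta" and dec: "\<forall>G\<in>C. \<exists>N P.
      N \<le> f (card (verts G)) \<and> (\<Union>i<N. P i) = verts G \<and>
      (\<forall>i<N. \<forall>j<N. i \<noteq> j \<longrightarrow> P i \<inter> P j = {}) \<and>
      (\<forall>idx :: nat \<Rightarrow> nat. (\<forall>k<2. idx k < N) \<longrightarrow> induced G (\<Union>k<2. P (idx k)) \<in> D)"
    unfolding has_decomp_def by blast
  from DD obtain d where dD: "\<forall>G\<in>D. \<forall>v\<in>verts G. degree G v \<le> d" unfolding Delta_def by blast
  have "eventually (\<lambda>n. real (f n) \<le> real n powr (1/2)) at_top" using sf unfolding subpoly_def by simp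
  then obtain n0 where n0: "\<And>n. n \<ge> n0 \<Longrightarrow> real (f n) \<le> real n powr (1/2)"
    unfolding eventually_at_top_linorder by blast
  have "degree G v \<le> max n0 (d*d)" if GC: "G \<in> C" and vG: "v \<in> verts G" for G v
  proof -
    have gG: "is_graph G" using hC GC by (simp add: hereditary_def)
    define S where "S = {u \<in> verts G. adj G u v}"
    define m where "m = card S"
    have fS: "finite S" using finite_verts[OF gG] S_def by simp
    have vS: "v \<notin> S" using adj_verts[OF gG] S_def by blast
    define H where "H = induced G (insert v S)"
    have "insert v S \<subseteq> verts G" using vG S_def by auto
    hence HC: "H \<in> C" using hC GC unfolding H_def hereditary_def by blast
    have vH: "verts H = insert v S" using vG by (auto simp: H_def S_def)
    have cH: "card (verts H) = m + 1" using vH fS vS m_def by simp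
    have "\<exists>N P. N \<le> f (card (verts H)) \<and> (\<Union>i<N. P i) = verts H \<and>
      (\<forall>i<N. \<forall>j<N. i \<noteq> j \<longrightarrow> P i \<inter> P j = {}) \<and>
      (\<forall>idx :: nat \<Rightarrow> nat. (\<forall>k<2. idx k < N) \<longrightarrow> induced H (\<Union>k<2. P (idx k)) \<in> D)"
      using dec HC by (rule bspec)
    then obtain N P where NP0: "N \<le> f (card (verts H))" and NP2: "(\<Union>i<N. P i) = verts H"
      and ind0: "\<forall>idx :: nat \<Rightarrow> nat. (\<forall>k<2. idx k < N) \<longrightarrow> induced H (\<Union>k<2. P (idx k)) \<in> D"
      by (elim exE conjE)
    have NP: "N \<le> f (m+1)" "(\<Union>i<N. P i) = verts H" using NP0 NP2 cH by simp_all
    have ind: "\<And>idx :: nat \<Rightarrow> nat. (\<forall>k<2. idx k < N) \<Longrightarrow> induced H (\<Union>k<2. P (idx k)) \<in> D"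
      using ind0 by blast
    obtain i where i: "i < N" "v \<in> P i" using NP(2) vH by auto
    have pj: "card (S \<inter> P j) \<le> d" if j: "j < N" for j
    proof -
      define idx where "idx = (\<lambda>k::nat. if k = 0 then i else j)"
      have "\<forall>k<2. idx k < N" using i j by (simp add: idx_def)
      moreover have "(\<Union>k<2. P (idx k)) = P i \<union> P j"
      proof
        show "(\<Union>k<2. P (idx k)) \<subseteq> P i \<union> P j" by (auto simp: idx_def split: if_splits)
        show "P i \<union> P j \<subseteq> (\<Union>k<2. P (idx k))"
        proof
          fix x assume "x \<in> P i \<union> P j"
          thus "x \<in> (\<Union>k<2. P (idx k))"
          proof
            assume "x \<in> P i" thus ?thesis by (intro UN_I[of 0]) (auto simp: idx_def)
          next
            assume "x \<in> P j" thus ?thesis by (intro UN_I[of 1]) (auto simp: idx_def)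
          qed
        qed
      qed
      ultimately have H'D: "induced H (P i \<union> P j) \<in> D" using ind[of idx] by simp
      let ?H' = "induced H (P i \<union> P j)"
      have vH': "v \<in> verts ?H'" using i vH by auto
      have "S \<inter> P j \<subseteq> {u \<in> verts ?H'. adj ?H' u v}"
        using vH i unfolding S_def H_def by (auto simp: adj_induced)
      moreover have "finite (verts ?H')" using vH fS by simp
      hence "finite {u \<in> verts ?H'. adj ?H' u v}" by (rule finite_subset[rotated]) blast
      ultimately have "card (S \<inter> P j) \<le> degree ?H' v" unfolding degree_def
        using card_mono by blast
      moreover have "degree ?H' v \<le> d" using dD H'D vH' by blast
      ultimately show ?thesis by simp
    qed
    have "S = (\<Union>j<N. S \<inter> P j)" using NP(2) vH by auto
    hence "m \<le> (\<Sum>j<N. card (S \<inter> P j))" unfolding m_def using card_UN_le[of "{..<N}" "\<lambda>j. S \<inter> P j"] by simp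
    also have "\<dots> \<le> N * d" using pj sum_bounded_above[of "{..<N}" "\<lambda>j. card (S \<inter> P j)" d] by simp
    also have "\<dots> \<le> f (m+1) * d" using NP(1) by simp
    finally have mf: "m \<le> f (m+1) * d" .
    have "m \<le> max n0 (d*d)"
    proof (cases "m + 1 \<ge> n0")
      case True
      have "real m \<le> real (f (m+1)) * real d" using mf by (metis of_nat_le_iff of_nat_mult)
      also have "\<dots> \<le> real (m+1) powr (1/2) * real d" using n0[OF True] by (intro mult_right_mono) auto
      also have "\<dots> = real d * sqrt (real m + 1)" by (simp add: powr_half_sqrt add.commute)
      finally have "m \<le> d * d" by (rule sq_bound)
      thus ?thesis by simp
    qed auto
    thus ?thesis unfolding degree_def m_def S_def by simp
  qed
  thus ?thesis using hC unfolding Delta_def by blast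
qed

lemma hered_Delta: "hered_property Delta"
  unfolding hered_property_def Delta_def by blast

lemma Lambda_Delta: "Lambda \<subseteq> Delta"
proof
  fix C assume "C \<in> Lambda"
  then obtain c where hC: "hereditary C" and cC: "\<forall>G\<in>C. \<forall>v\<in>verts G. card (component G v) \<le> c"
    unfolding Lambda_def by blast
  have "degree G v \<le> c" if GC: "G \<in> C" and vG: "v \<in> verts G" for G v
  proof -
    have gG: "is_graph G" using hC GC by (simp add: hereditary_def)
    have "{u \<in> verts G. adj G u v} \<subseteq> component G v"
      unfolding component_def by (auto intro!: r_into_rtranclp dest: adj_sym[THEN iffD1])
    hence "degree G v \<le> card (component G v)" unfolding degree_def
      using card_mono finite_comp[OF gG] by blast
    moreover have "card (component G v) \<le> c" using cC GC vG by blast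
    ultimately show ?thesis by simp
  qed
  thus "C \<in> Delta" using hC unfolding Delta_def by blast
qed

lemma Delta_star: assumes "C \<in> Delta" shows "C \<in> star_closure Delta"
proof -
  have hC: "hereditary C" using assms unfolding Delta_def by blast
  have "has_decomp Delta C (\<lambda>_. 1) p" if p: "p > 0" for p
    unfolding has_decomp_def
  proof (intro bexI[OF _ assms] ballI)
    fix G assume GC: "G \<in> C"
    show "\<exists>N P. N \<le> 1 \<and> (\<Union>i<N. P i) = verts G \<and>
        (\<forall>i<N. \<forall>j<N. i \<noteq> j \<longrightarrow> P i \<inter> P j = {}) \<and>
        (\<forall>idx :: nat \<Rightarrow> nat. (\<forall>k<p. idx k < N) \<longrightarrow> induced G (\<Union>k<p. P (idx k)) \<in> C)"
    proof (intro exI[of _ "1::nat"] exI[of _ "\<lambda>_. verts G"] conjI allI impI)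
      fix idx :: "nat \<Rightarrow> nat"
      have "(\<Union>k<p. verts G) = verts G" using p by auto
      moreover have "induced G (verts G) \<in> C" using hC GC unfolding hereditary_def by blast
      ultimately show "induced G (\<Union>k<p. verts G) \<in> C" by simp
    qed auto
  qed
  moreover have "mono (\<lambda>_::nat. 1::nat)" by (simp add: mono_def)
  ultimately show ?thesis using hC subpoly_const unfolding star_closure_def by blast
qed

lemma plus_star: "plus_closure P \<subseteq> star_closure P"
proof
  fix C assume C: "C \<in> plus_closure P"
  have hC: "hereditary C" using C unfolding plus_closure_def by simp
  have c: "\<And>p. p > 0 \<Longrightarrow> \<exists>c::nat. has_decomp P C (\<lambda>_. c) p"
    using C unfolding plus_closure_def by simp
  have ex: "\<exists>f. mono f \<and> subpoly f \<and> has_decomp P C f p" if p0: "p > 0" for p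
  proof -
    obtain c :: nat where hc: "has_decomp P C (\<lambda>_. c) p" using c[OF p0] by (elim exE)
    have "mono (\<lambda>_::nat. c)" by (simp add: mono_def)
    with hc subpoly_const[of c] show ?thesis by (intro exI[of _ "\<lambda>_. c"]) simp
  qed
  show "C \<in> star_closure P" unfolding star_closure_def using hC ex by simp
qed

lemma decomp_mono: "P \<subseteq> Q \<Longrightarrow> has_decomp P C f p \<Longrightarrow> has_decomp Q C f p"
  unfolding has_decomp_def by (elim bexE, intro bexI) (assumption, blast)

lemma star_mono: assumes PQ: "P \<subseteq> Q" shows "star_closure P \<subseteq> star_closure Q"
proof
  fix C assume C: "C \<in> star_closure P"
  have hC: "hereditary C" using C unfolding star_closure_def by simp
  have h: "\<And>p. p > 0 \<Longrightarrow> \<exists>f. mono f \<and> subpoly f \<and> has_decomp P C f p"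
    using C unfolding star_closure_def by simp
  have "\<exists>f. mono f \<and> subpoly f \<and> has_decomp Q C f p" if p0: "p > 0" for p
    using h[OF p0] decomp_mono[OF PQ] by blast
  thus "C \<in> star_closure Q" unfolding star_closure_def using hC by simp
qed

theorem mainTheorem3:
  shows "is_decomposition_horizon_of Delta Lambda \<and>
         star_closure Lambda = plus_closure Lambda \<and> plus_closure Lambda = Delta"
proof -
  have sD: "star_closure Delta = Delta" using star_Delta Delta_star by blast
  have a: "Delta \<subseteq> plus_closure Lambda" using Delta_plus by blast
  have b: "plus_closure Lambda \<subseteq> star_closure Lambda" by (rule plus_star)
  have c: "star_closure Lambda \<subseteq> Delta" using star_mono[OF Lambda_Delta] sD by blast
  have hor: "decomposition_horizon Delta" unfolding decomposition_horizon_def using hered_Delta sD by blast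
  have "Delta \<subseteq> Q" if "decomposition_horizon Q" "Lambda \<subseteq> Q" for Q
  proof -
    have "star_closure Lambda \<subseteq> star_closure Q" using star_mono that(2) by blast
    thus ?thesis using that(1) a b unfolding decomposition_horizon_def by blast
  qed
  thus ?thesis unfolding is_decomposition_horizon_of_def using hor Lambda_Delta a b c by blast
qed

end
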